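(* For every total Boolean function $f:\{0,1\}^n\to\{0,1\}$, $\lambda(f)\le\deg(f)$.
   Context: $\deg(f)$ is the degree of the unique multilinear real polynomial agreeing with $f$. The sensitivity graph $G_f$ has vertex set $\{0,1\}^n$ and an edge between $x$ and $y$ iff they differ in exactly one coordinate and $f(x)\ne f(y)$; $A_f$ is its adjacency matrix and $\lambda(f)=\|A_f\|$ (spectral norm). *)

theory Defs
  imports Complex_Main
begin

text \<open>Points of the Boolean cube {0,1}^n are encoded as subsets x of {..<n}
  (x = set of coordinates equal to 1). A Boolean function is f :: nat set => bool;
  only its values on Pow {..<n} matter.\<close>

definition cube :: "nat \<Rightarrow> nat set set" where
  "cube n = Pow {..<n}"

text \<open>A multilinear real polynomial in x_0..x_{n-1} is given by its coefficient
  function c on monomials S (subsets of {..<n}); its value at x is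
  sum over S of c S * prod_{i in S} x_i, i.e. c S summed over S contained in x.\<close>

definition mlpoly_eval :: "nat \<Rightarrow> (nat set \<Rightarrow> real) \<Rightarrow> nat set \<Rightarrow> real" where
  "mlpoly_eval n c x = (\<Sum>S\<in>cube n. c S * (\<Prod>i\<in>S. (if i \<in> x then 1 else 0)))"

definition represents :: "nat \<Rightarrow> (nat set \<Rightarrow> bool) \<Rightarrow> (nat set \<Rightarrow> real) \<Rightarrow> bool" where
  "represents n f c \<longleftrightarrow> (\<forall>S. S \<notin> cube n \<longrightarrow> c S = 0) \<and>
     (\<forall>x\<in>cube n. mlpoly_eval n c x = of_bool (f x))"

definition ml_coeffs :: "nat \<Rightarrow> (nat set \<Rightarrow> bool) \<Rightarrow> nat set \<Rightarrow> real" where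
  "ml_coeffs n f = (THE c. represents n f c)"

text \<open>Degree (the zero polynomial gets degree 0).\<close>
definition bdeg :: "nat \<Rightarrow> (nat set \<Rightarrow> bool) \<Rightarrow> nat" where
  "bdeg n f = Max (insert 0 {card S | S. S \<in> cube n \<and> ml_coeffs n f S \<noteq> 0})"

definition sens_adj :: "nat \<Rightarrow> (nat set \<Rightarrow> bool) \<Rightarrow> nat set \<Rightarrow> nat set \<Rightarrow> real" where
  "sens_adj n f x y = (if x \<in> cube n \<and> y \<in> cube n \<and> card (x - y) + card (y - x) = 1
                          \<and> f x \<noteq> f y then 1 else 0)"

definition spec_norm :: "nat \<Rightarrow> (nat set \<Rightarrow> nat set \<Rightarrow> real) \<Rightarrow> real" where
  "spec_norm n A = Sup {sqrt (\<Sum>x\<in>cube n. (\<Sum>y\<in>cube n. A x y * v y)\<^sup>2) | v.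
                         (\<Sum>y\<in>cube n. (v y)\<^sup>2) \<le> 1}"

definition sens_lambda :: "nat \<Rightarrow> (nat set \<Rightarrow> bool) \<Rightarrow> real" where
  "sens_lambda n f = spec_norm n (sens_adj n f)"

end

theory Submission
  imports Defs
begin


lemma cs_ineq:
  fixes a :: "'b \<Rightarrow> real" and R :: "'b set"
  shows "(\<Sum>r\<in>R. a r)\<^sup>2 \<le> real (card R) * (\<Sum>r\<in>R. (a r)\<^sup>2)"
proof (cases "finite R \<and> R \<noteq> {}")
  case True
  define m where "m = (\<Sum>r\<in>R. a r) / real (card R)"
  have c: "real (card R) > 0" using True by auto
  have "0 \<le> (\<Sum>r\<in>R. (a r - m)\<^sup>2)" by (intro sum_nonneg) auto
  also have "\<dots> = (\<Sum>r\<in>R. (a r)\<^sup>2) - 2 * m * (\<Sum>r\<in>R. a r) + real (card R) * m\<^sup>2"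
    by (simp add: power2_diff sum.distrib sum_subtractf sum_distrib_left sum_distrib_right algebra_simps)
  also have "\<dots> = (\<Sum>r\<in>R. (a r)\<^sup>2) - (\<Sum>r\<in>R. a r)\<^sup>2 / real (card R)"
    using c by (simp add: m_def power2_eq_square field_simps)
  finally show ?thesis using c by (simp add: field_simps)
next
  case False then show ?thesis by auto
qed

definition flip :: "nat set \<Rightarrow> nat \<Rightarrow> nat set" where
  "flip x i = (if i \<in> x then x - {i} else insert i x)"

lemma flip_flip[simp]: "flip (flip x i) i = x"
  by (auto simp: flip_def)

lemma flip_cube: "i < n \<Longrightarrow> x \<in> cube n \<Longrightarrow> flip x i \<in> cube n"
  by (auto simp: flip_def cube_def)

lemma sum_flip:
  assumes "i < n"
  shows "(\<Sum>x\<in>cube n. F (flip x i)) = (\<Sum>x\<in>cube n. F x)"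
  by (rule sum.reindex_bij_witness[where i="\<lambda>x. flip x i" and j="\<lambda>x. flip x i"])
     (auto simp: flip_cube assms)

lemma sum_flip_neg:
  assumes "i < n" "\<And>x. x \<in> cube n \<Longrightarrow> F (flip x i) = - F x"
  shows "(\<Sum>x\<in>cube n. F x) = (0::real)"
proof -
  have "(\<Sum>x\<in>cube n. F x) = (\<Sum>x\<in>cube n. F (flip x i))" by (rule sum_flip[OF assms(1), symmetric])
  also have "\<dots> = - (\<Sum>x\<in>cube n. F x)" using assms(2) by (simp add: sum_negf)
  finally show ?thesis by simp
qed

definition chi :: "nat set \<Rightarrow> nat set \<Rightarrow> real" where
  "chi a b = (-1) ^ card (a \<inter> b)"

lemma chi_sym: "chi a b = chi b a" by (simp add: chi_def Int_commute)

lemma chi_sq: "chi a b * chi a b = 1"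
  by (simp add: chi_def flip: power_add)

lemma chi_flip:
  assumes "finite x"
  shows "chi U (flip x i) = (if i \<in> U then - chi U x else chi U x)"
proof (cases "i \<in> U")
  case True
  show ?thesis
  proof (cases "i \<in> x")
    case True
    have "U \<inter> flip x i = (U \<inter> x) - {i}" using True by (auto simp: flip_def)
    moreover have "card (U \<inter> x) = Suc (card ((U \<inter> x) - {i}))"
      using True \<open>i \<in> U\<close> assms by (metis IntI card_Suc_Diff1 finite_Int)
    ultimately show ?thesis using \<open>i\<in>U\<close> by (simp add: chi_def)
  next
    case False
    have "U \<inter> flip x i = insert i (U \<inter> x)" using False \<open>i\<in>U\<close> by (auto simp: flip_def)
    moreover have "card (insert i (U \<inter> x)) = Suc (card (U \<inter> x))"
      using False assms by simp
    ultimately show ?thesis using \<open>i\<in>U\<close> by (simp add: chi_def)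
  qed
next
  case False
  have "U \<inter> flip x i = U \<inter> x" using False by (auto simp: flip_def)
  then show ?thesis using False by (simp add: chi_def)
qed

lemma cube_finite[simp]: "finite (cube n)" by (simp add: cube_def)
lemma cube_elem_finite: "x \<in> cube n \<Longrightarrow> finite x"
  by (auto simp: cube_def intro: finite_subset)
lemma card_cube: "card (cube n) = 2 ^ n" by (simp add: cube_def card_Pow)

lemma chi_sum:
  "(\<Sum>x\<in>cube n. chi U x) = (if U \<inter> {..<n} = {} then 2 ^ n else 0)"
proof (cases "U \<inter> {..<n} = {}")
  case True
  have "\<And>x. x \<in> cube n \<Longrightarrow> chi U x = 1"
  proof -
    fix x assume "x \<in> cube n"
    then have "U \<inter> x = {}" using True by (auto simp: cube_def)
    then show "chi U x = 1" by (simp add: chi_def)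
  qed
  then have "(\<Sum>x\<in>cube n. chi U x) = (\<Sum>x\<in>cube n. 1)" by simp
  then show ?thesis using True by (simp add: card_cube)
next
  case False
  then obtain i where i: "i \<in> U" "i < n" by auto
  have "(\<Sum>x\<in>cube n. chi U x) = 0"
    by (rule sum_flip_neg[OF i(2)]) (simp add: chi_flip cube_elem_finite i(1))
  then show ?thesis using False by simp
qed

lemma chi_mult:
  assumes "finite x"
  shows "chi U x * chi V x = chi ((U - V) \<union> (V - U)) x"
proof -
  have fin: "finite (A \<inter> x)" for A using assms by simp
  have e1: "card (U \<inter> x) = card ((U - V) \<inter> x) + card (U \<inter> V \<inter> x)"
    using fin by (subst card_Un_disjoint[symmetric]) (auto intro: arg_cong[where f=card])
  have e2: "card (V \<inter> x) = card ((V - U) \<inter> x) + card (U \<inter> V \<inter> x)"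
    using fin by (subst card_Un_disjoint[symmetric]) (auto intro: arg_cong[where f=card])
  have e3: "card (((U - V) \<union> (V - U)) \<inter> x) = card ((U - V) \<inter> x) + card ((V - U) \<inter> x)"
    using fin by (subst card_Un_disjoint[symmetric]) (auto intro: arg_cong[where f=card])
  have "chi U x * chi V x = (-1::real) ^ (card (((U - V) \<union> (V - U)) \<inter> x) + 2 * card (U \<inter> V \<inter> x))"
    by (simp add: chi_def e1 e2 e3 mult_2 flip: power_add) (simp add: algebra_simps)
  also have "\<dots> = chi ((U - V) \<union> (V - U)) x" by (simp add: power_add power_mult chi_def)
  finally show ?thesis .
qed

lemma chi_orth:
  assumes "S \<in> cube n" "T \<in> cube n"
  shows "(\<Sum>x\<in>cube n. chi S x * chi T x) = (if S = T then 2 ^ n else 0)"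
proof -
  have "(\<Sum>x\<in>cube n. chi S x * chi T x) = (\<Sum>x\<in>cube n. chi ((S - T) \<union> (T - S)) x)"
    by (intro sum.cong refl chi_mult cube_elem_finite)
  also have "\<dots> = (if S = T then 2 ^ n else 0)"
  proof (cases "S = T")
    case True then show ?thesis by (simp add: chi_sum)
  next
    case False
    then have "((S - T) \<union> (T - S)) \<inter> {..<n} \<noteq> {}" using assms by (auto simp: cube_def)
    then show ?thesis using False by (simp add: chi_sum)
  qed
  finally show ?thesis .
qed


definition hat :: "nat \<Rightarrow> (nat set \<Rightarrow> real) \<Rightarrow> nat set \<Rightarrow> real" where
  "hat n u S = (\<Sum>x\<in>cube n. chi S x * u x)"

lemma hat_inv:
  assumes "x \<in> cube n"
  shows "(\<Sum>S\<in>cube n. chi S x * hat n u S) = 2 ^ n * u x"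
proof -
  have "(\<Sum>S\<in>cube n. chi S x * hat n u S) = (\<Sum>S\<in>cube n. \<Sum>y\<in>cube n. u y * (chi x S * chi y S))"
    by (simp add: hat_def sum_distrib_left chi_sym mult_ac)
  also have "\<dots> = (\<Sum>y\<in>cube n. u y * (\<Sum>S\<in>cube n. chi x S * chi y S))"
    by (subst sum.swap) (simp add: sum_distrib_left)
  also have "\<dots> = (\<Sum>y\<in>cube n. if y = x then 2 ^ n * u x else 0)"
    by (intro sum.cong refl) (auto simp: chi_orth assms)
  also have "\<dots> = 2 ^ n * u x" using assms by simp
  finally show ?thesis .
qed

lemma parseval:
  "(\<Sum>S\<in>cube n. (hat n u S)\<^sup>2) = 2 ^ n * (\<Sum>x\<in>cube n. (u x)\<^sup>2)"
proof -
  have "(\<Sum>S\<in>cube n. (hat n u S)\<^sup>2) = (\<Sum>S\<in>cube n. \<Sum>x\<in>cube n. u x * (chi S x * hat n u S))"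
    by (simp add: power2_eq_square hat_def sum_distrib_left sum_distrib_right mult_ac)
  also have "\<dots> = (\<Sum>x\<in>cube n. u x * (\<Sum>S\<in>cube n. chi S x * hat n u S))"
    by (subst sum.swap) (simp add: sum_distrib_left)
  also have "\<dots> = (\<Sum>x\<in>cube n. 2 ^ n * (u x)\<^sup>2)"
    by (intro sum.cong refl) (simp add: hat_inv power2_eq_square)
  finally show ?thesis by (simp add: sum_distrib_left)
qed

definition Lop :: "nat \<Rightarrow> (nat set \<Rightarrow> real) \<Rightarrow> nat set \<Rightarrow> real" where
  "Lop n v x = (\<Sum>i<n. (v x - v (flip x i)) / 2)"

lemma hat_Lop:
  assumes "S \<in> cube n"
  shows "hat n (Lop n v) S = real (card S) * hat n v S"
proof -
  have "hat n (Lop n v) S = (\<Sum>x\<in>cube n. \<Sum>i<n. (chi S x * v x - chi S x * v (flip x i)) / 2)"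
    by (simp add: hat_def Lop_def sum_distrib_left right_diff_distrib)
  also have "\<dots> = (\<Sum>i<n. \<Sum>x\<in>cube n. (chi S x * v x - chi S x * v (flip x i)) / 2)"
    by (rule sum.swap)
  also have "\<dots> = (\<Sum>i<n. \<Sum>x\<in>cube n. v x * ((chi S x - chi S (flip x i)) / 2))"
  proof -
   have *: "(\<Sum>x\<in>cube n. (chi S x * v x - chi S x * v (flip x i)) / 2) =
          (\<Sum>x\<in>cube n. v x * ((chi S x - chi S (flip x i)) / 2))" if i: "i < n" for i
   proof -
    have "(\<Sum>x\<in>cube n. chi S x * v (flip x i)) = (\<Sum>x\<in>cube n. chi S (flip x i) * v x)"
      using sum_flip[OF i, of "\<lambda>y. chi S (flip y i) * v y"] by simp
    then show ?thesis
      by (simp add: sum_divide_distrib[symmetric] sum_subtractf algebra_simps)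
   qed
   show ?thesis by (rule sum.cong[OF refl]) (rule *, simp)
  qed
  also have "\<dots> = (\<Sum>x\<in>cube n. v x * (\<Sum>i<n. (chi S x - chi S (flip x i)) / 2))"
    by (subst sum.swap) (simp add: sum_distrib_left)
  also have "\<dots> = (\<Sum>x\<in>cube n. v x * (real (card S) * chi S x))"
  proof -
   have *: "(\<Sum>i<n. (chi S x - chi S (flip x i)) / 2) = real (card S) * chi S x" if x: "x \<in> cube n" for x
   proof -
    have "(\<Sum>i<n. (chi S x - chi S (flip x i)) / 2) = (\<Sum>i<n. if i \<in> S then chi S x else 0)"
      by (intro sum.cong refl) (simp add: chi_flip cube_elem_finite[OF x])
    also have "\<dots> = (\<Sum>i\<in>{..<n} \<inter> S. chi S x)"
      using sum.inter_restrict[of "{..<n}" "\<lambda>_. chi S x" S] by simp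
    also have "{..<n} \<inter> S = S" using assms by (auto simp: cube_def)
    finally show ?thesis by simp
   qed
   show ?thesis by (rule sum.cong[OF refl]) (subst *, auto)
  qed
  finally show ?thesis by (simp add: hat_def sum_distrib_left mult_ac)
qed

definition Kmat :: "nat \<Rightarrow> (nat set \<Rightarrow> real) \<Rightarrow> nat set \<Rightarrow> nat set \<Rightarrow> real" where
  "Kmat n g S T = (\<Sum>x\<in>cube n. chi S x * g x * chi T x) / 2 ^ n"

lemma Kmat_sum: "(\<Sum>T\<in>A. Kmat n g S T * u T) = (\<Sum>T\<in>A. \<Sum>x\<in>cube n. chi S x * g x * (chi T x * u T)) / 2^n"
  by (simp add: Kmat_def sum_divide_distrib sum_distrib_right mult.assoc)

lemma hat_mult:
  assumes "S \<in> cube n"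
  shows "hat n (\<lambda>x. g x * u x) S = (\<Sum>T\<in>cube n. Kmat n g S T * hat n u T)"
proof -
  have "(\<Sum>T\<in>cube n. Kmat n g S T * hat n u T) =
        (\<Sum>T\<in>cube n. \<Sum>x\<in>cube n. chi S x * g x * (chi T x * hat n u T)) / 2 ^ n"
    by (rule Kmat_sum)
  also have "\<dots> = (\<Sum>x\<in>cube n. \<Sum>T\<in>cube n. chi S x * g x * (chi T x * hat n u T)) / 2 ^ n"
    by (subst sum.swap) (rule refl)
  also have "\<dots> = (\<Sum>x\<in>cube n. chi S x * g x * (\<Sum>T\<in>cube n. chi T x * hat n u T)) / 2 ^ n"
    by (simp add: sum_distrib_left)
  also have "\<dots> = (\<Sum>x\<in>cube n. chi S x * g x * u x)"
    unfolding sum_divide_distrib by (intro sum.cong refl) (simp add: hat_inv)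
  finally have X: "(\<Sum>T\<in>cube n. Kmat n g S T * hat n u T) = (\<Sum>x\<in>cube n. chi S x * g x * u x)" .
  show ?thesis using X by (simp add: hat_def[of n "\<lambda>x. g x * u x"] mult.assoc)
qed

lemma K_iso:
  assumes g: "\<And>x. x \<in> cube n \<Longrightarrow> (g x)\<^sup>2 = 1"
  shows "(\<Sum>S\<in>cube n. (\<Sum>T\<in>cube n. Kmat n g S T * u T)\<^sup>2) = (\<Sum>T\<in>cube n. (u T)\<^sup>2)"
proof -
  define z where "z x = hat n u x / 2 ^ n" for x
  have z: "(\<Sum>T\<in>cube n. Kmat n g S T * u T) = hat n (\<lambda>x. g x * z x) S" for S
  proof -
    have "(\<Sum>T\<in>cube n. Kmat n g S T * u T) =
        (\<Sum>T\<in>cube n. \<Sum>x\<in>cube n. chi S x * g x * (chi T x * u T)) / 2 ^ n"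
      by (rule Kmat_sum)
    also have "\<dots> = (\<Sum>x\<in>cube n. \<Sum>T\<in>cube n. chi S x * g x * (chi T x * u T)) / 2 ^ n"
      by (subst sum.swap) (rule refl)
    also have "\<dots> = hat n (\<lambda>x. g x * z x) S"
      by (simp add: hat_def z_def sum_distrib_left sum_divide_distrib chi_sym mult_ac)
    finally show ?thesis .
  qed
  have "(\<Sum>S\<in>cube n. (\<Sum>T\<in>cube n. Kmat n g S T * u T)\<^sup>2) = 2 ^ n * (\<Sum>x\<in>cube n. (g x * z x)\<^sup>2)"
    by (simp add: z parseval)
  also have "\<dots> = 2 ^ n * (\<Sum>x\<in>cube n. (z x)\<^sup>2)"
    by (simp add: power_mult_distrib g)
  also have "\<dots> = (\<Sum>x\<in>cube n. (hat n u x)\<^sup>2) / 2 ^ n"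
    by (simp add: z_def power_divide sum_divide_distrib[symmetric] power2_eq_square)
  also have "\<dots> = (\<Sum>T\<in>cube n. (u T)\<^sup>2)" by (simp add: parseval)
  finally show ?thesis .
qed



definition cs :: "nat \<Rightarrow> real" where
  "cs k = (if k mod 4 = 0 then 1 else if k mod 4 = 2 then -1 else 0)"
definition sn :: "nat \<Rightarrow> real" where
  "sn k = (if k mod 4 = 1 then 1 else if k mod 4 = 3 then -1 else 0)"

lemma cs_sn_sq: "(cs k)\<^sup>2 + (sn k)\<^sup>2 = 1"
  by (auto simp: cs_def sn_def)

lemma cs_sn_succ: "sn (Suc b) * cs b - cs (Suc b) * sn b = 1"
proof -
  have "b mod 4 = 0 \<or> b mod 4 = 1 \<or> b mod 4 = 2 \<or> b mod 4 = 3" by auto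
  then show ?thesis by (auto simp: cs_def sn_def mod_Suc)
qed

lemma cs_sn_diff:
  assumes "a \<le> b + 1" "b \<le> a + 1"
  shows "sn a * cs b - cs a * sn b = real a - real b"
proof -
  consider "a = b" | "a = Suc b" | "b = Suc a" using assms by linarith
  then show ?thesis
  proof cases
    case 1 then show ?thesis by simp
  next
    case 2 then show ?thesis using cs_sn_succ[of b] by simp
  next
    case 3 then show ?thesis using cs_sn_succ[of a] by (simp add: algebra_simps)
  qed
qed

lemma hermite:
  assumes "d > 0"
  shows "(\<Sum>r<d. (m + r) div d) = (m::nat)"
proof (induction m)
  case 0
  have "(\<Sum>r<d. (0 + r) div d) = (\<Sum>r<d. 0)" by (intro sum.cong) auto
  then show ?case by simp
next
  case (Suc m)
  have "(\<Sum>r<d. (Suc m + r) div d) = (\<Sum>r<d. (m + Suc r) div d)" by simp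
  also have "\<dots> = (\<Sum>r<Suc d. (m + r) div d) - (m + 0) div d"
    by (subst sum.lessThan_Suc_shift) simp
  also have "\<dots> = (\<Sum>r<d. (m + r) div d) + (m + d) div d - m div d" by simp
  also have "(m + d) div d = m div d + 1" using assms by simp
  finally show ?case using Suc by simp
qed

lemma div_close:
  assumes "d > 0" "a \<le> b + d" "b \<le> a + (d::nat)"
  shows "(a + r) div d \<le> Suc ((b + r) div d)"
proof -
  have "(a + r) div d \<le> (b + r + d) div d" by (rule div_le_mono) (use assms in linarith)
  also have "\<dots> = Suc ((b + r) div d)" using assms by simp
  finally show ?thesis .
qed

lemma band_bound:
  fixes K :: "'a \<Rightarrow> 'a \<Rightarrow> real" and h :: "'a \<Rightarrow> nat"
  assumes fin: "finite I"
  and iso: "\<And>u. (\<Sum>S\<in>I. (\<Sum>T\<in>I. K S T * u T)\<^sup>2) = (\<Sum>T\<in>I. (u T)\<^sup>2)"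
  and band: "\<And>S T. S \<in> I \<Longrightarrow> T \<in> I \<Longrightarrow> K S T \<noteq> 0 \<Longrightarrow> h S \<le> h T + d \<and> h T \<le> h S + d"
  shows "(\<Sum>S\<in>I. (\<Sum>T\<in>I. (real (h S) - real (h T)) * K S T * u T)\<^sup>2)
           \<le> (real d)\<^sup>2 * (\<Sum>T\<in>I. (u T)\<^sup>2)"
proof (cases "d = 0")
  case True
  have "(real (h S) - real (h T)) * K S T = 0" if "S \<in> I" "T \<in> I" for S T
    using band[OF that] True by (cases "K S T = 0") auto
  then have "(\<Sum>T\<in>I. (real (h S) - real (h T)) * K S T * u T) = 0" if "S \<in> I" for S
    using that by (intro sum.neutral) auto
  then have "(\<Sum>S\<in>I. (\<Sum>T\<in>I. (real (h S) - real (h T)) * K S T * u T)\<^sup>2) = 0"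
    by simp
  then show ?thesis using True by simp
next
  case False
  then have d: "d > 0" by simp
  define k where "k r S = (h S + r) div d" for r S
  define Z where "Z r S = sn (k r S) * (\<Sum>T\<in>I. K S T * (cs (k r T) * u T))
                     - cs (k r S) * (\<Sum>T\<in>I. K S T * (sn (k r T) * u T))" for r S
  have key: "(real (h S) - real (h T)) * K S T
      = (\<Sum>r<d. (sn (k r S) * cs (k r T) - cs (k r S) * sn (k r T))) * K S T"
    if "S \<in> I" "T \<in> I" for S T
  proof (cases "K S T = 0")
    case False
    have b: "h S \<le> h T + d" "h T \<le> h S + d" using band[OF that False] by auto
    have "(\<Sum>r<d. (sn (k r S) * cs (k r T) - cs (k r S) * sn (k r T)))
        = (\<Sum>r<d. real (k r S) - real (k r T))"
      by (intro sum.cong refl cs_sn_diff) (simp_all add: k_def div_close[OF d b] div_close[OF d b(2) b(1)])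
    also have "\<dots> = real (\<Sum>r<d. k r S) - real (\<Sum>r<d. k r T)"
      by (simp add: sum_subtractf)
    also have "\<dots> = real (h S) - real (h T)"
      by (simp add: k_def hermite[OF d])
    finally show ?thesis by simp
  qed simp
  have Zsum: "(\<Sum>T\<in>I. (real (h S) - real (h T)) * K S T * u T) = (\<Sum>r<d. Z r S)"
    if "S \<in> I" for S
  proof -
    have "(\<Sum>T\<in>I. (real (h S) - real (h T)) * K S T * u T)
        = (\<Sum>T\<in>I. \<Sum>r<d. (sn (k r S) * cs (k r T) - cs (k r S) * sn (k r T)) * K S T * u T)"
      by (intro sum.cong refl) (simp add: key[OF that] sum_distrib_right)
    also have "\<dots> = (\<Sum>r<d. \<Sum>T\<in>I. (sn (k r S) * cs (k r T) - cs (k r S) * sn (k r T)) * K S T * u T)"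
      by (rule sum.swap)
    also have "\<dots> = (\<Sum>r<d. Z r S)"
      by (intro sum.cong refl)
         (simp add: Z_def sum_distrib_left sum_subtractf algebra_simps)
    finally show ?thesis .
  qed
  have Zr: "(\<Sum>S\<in>I. (Z r S)\<^sup>2) \<le> (\<Sum>T\<in>I. (u T)\<^sup>2)" for r
  proof -
    define A where "A S = (\<Sum>T\<in>I. K S T * (cs (k r T) * u T))" for S
    define B where "B S = (\<Sum>T\<in>I. K S T * (sn (k r T) * u T))" for S
    have pt: "(Z r S)\<^sup>2 \<le> (A S)\<^sup>2 + (B S)\<^sup>2" for S
    proof -
      have zz: "Z r S = sn (k r S) * A S - cs (k r S) * B S" by (simp add: Z_def A_def B_def)
      have "(Z r S)\<^sup>2 \<le> (Z r S)\<^sup>2 + (cs (k r S) * A S + sn (k r S) * B S)\<^sup>2" by simp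
      also have "\<dots> = ((cs (k r S))\<^sup>2 + (sn (k r S))\<^sup>2) * ((A S)\<^sup>2 + (B S)\<^sup>2)"
        unfolding zz by (simp add: power2_eq_square algebra_simps)
      finally show ?thesis by (simp add: cs_sn_sq)
    qed
    have "(\<Sum>S\<in>I. (Z r S)\<^sup>2) \<le> (\<Sum>S\<in>I. (A S)\<^sup>2 + (B S)\<^sup>2)"
      by (intro sum_mono pt)
    also have "\<dots> = (\<Sum>T\<in>I. (cs (k r T) * u T)\<^sup>2) + (\<Sum>T\<in>I. (sn (k r T) * u T)\<^sup>2)"
      by (simp add: sum.distrib A_def B_def iso)
    also have "\<dots> = (\<Sum>T\<in>I. (u T)\<^sup>2)"
      by (simp add: sum.distrib[symmetric] power_mult_distrib distrib_right[symmetric] cs_sn_sq)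
    finally show ?thesis .
  qed
  have "(\<Sum>S\<in>I. (\<Sum>T\<in>I. (real (h S) - real (h T)) * K S T * u T)\<^sup>2)
      = (\<Sum>S\<in>I. (\<Sum>r<d. Z r S)\<^sup>2)"
    by (intro sum.cong refl) (simp add: Zsum)
  also have "\<dots> \<le> (\<Sum>S\<in>I. real d * (\<Sum>r<d. (Z r S)\<^sup>2))"
    by (intro sum_mono) (use cs_ineq[of "\<lambda>r. Z r _" "{..<d}"] in simp)
  also have "\<dots> = real d * (\<Sum>r<d. \<Sum>S\<in>I. (Z r S)\<^sup>2)"
    by (simp add: sum_distrib_left sum.swap[of _ I "{..<d}"])
  also have "\<dots> \<le> real d * (\<Sum>r<d. \<Sum>T\<in>I. (u T)\<^sup>2)"
    by (intro mult_left_mono sum_mono Zr) auto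
  also have "\<dots> = (real d)\<^sup>2 * (\<Sum>T\<in>I. (u T)\<^sup>2)"
    by (simp add: power2_eq_square)
  finally show ?thesis .
qed



lemma prod_ind:
  assumes "finite S"
  shows "(\<Prod>i\<in>S. (if i \<in> x then (1::real) else 0)) = (if S \<subseteq> x then 1 else 0)"
proof (cases "S \<subseteq> x")
  case True
  have "(\<Prod>i\<in>S. (if i \<in> x then (1::real) else 0)) = (\<Prod>i\<in>S. 1)"
    by (intro prod.cong refl) (use True in auto)
  then show ?thesis using True by simp
next
  case False
  then obtain i where "i \<in> S" "i \<notin> x" by auto
  then show ?thesis using assms False by (auto intro: prod_zero)
qed

lemma mlpoly_eval_alt:
  "mlpoly_eval n c x = (\<Sum>S\<in>cube n. c S * (if S \<subseteq> x then 1 else 0))"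
  unfolding mlpoly_eval_def
  by (intro sum.cong refl) (simp add: prod_ind cube_elem_finite)

lemma rep_unique:
  assumes "represents n f c" "represents n f c'"
  shows "c = c'"
proof
  fix S
  define e where "e T = c T - c' T" for T
  have e0: "\<And>T. T \<notin> cube n \<Longrightarrow> e T = 0" using assms by (simp add: represents_def e_def)
  have ev: "(\<Sum>T\<in>cube n. e T * (if T \<subseteq> x then 1 else 0)) = 0" if "x \<in> cube n" for x
  proof -
    have "(\<Sum>T\<in>cube n. e T * (if T \<subseteq> x then 1 else 0)) = mlpoly_eval n c x - mlpoly_eval n c' x"
      by (simp add: mlpoly_eval_alt e_def left_diff_distrib sum_subtractf)
    then show ?thesis using assms that by (simp add: represents_def)
  qed
  have "e S = 0"
  proof (cases "S \<in> cube n")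
    case False then show ?thesis by (rule e0)
  next
    case True
    have "finite S" using True by (rule cube_elem_finite)
    then show ?thesis using True
    proof (induction S rule: finite_psubset_induct)
      case (psubset A)
      have "0 = (\<Sum>T\<in>cube n. e T * (if T \<subseteq> A then 1 else 0))" using ev[OF psubset.prems] by simp
      also have "\<dots> = e A * (if A \<subseteq> A then 1 else 0) + (\<Sum>T\<in>cube n - {A}. e T * (if T \<subseteq> A then 1 else 0))"
        by (rule sum.remove[OF cube_finite psubset.prems])
      also have "(\<Sum>T\<in>cube n - {A}. e T * (if T \<subseteq> A then 1 else 0)) = 0"
      proof (rule sum.neutral, rule ballI)
        fix T assume "T \<in> cube n - {A}"
        then have T: "T \<in> cube n" "T \<noteq> A" by auto
        show "e T * (if T \<subseteq> A then 1 else 0) = 0"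
        proof (cases "T \<subseteq> A")
          case True
          then have "T \<subset> A" using T by auto
          then show ?thesis using psubset.IH T by simp
        qed simp
      qed
      finally show ?case by simp
    qed
  qed
  then show "c S = c' S" by (simp add: e_def)
qed

lemma chi_prod:
  assumes "finite U"
  shows "chi U x = (\<Prod>i\<in>U. (if i \<in> x then -1 else 1))"
proof -
  have "(\<Prod>i\<in>U. (if i \<in> x then -1 else 1::real)) = (\<Prod>i\<in>U \<inter> {i. i \<in> x}. -1) * (\<Prod>i\<in>U \<inter> - {i. i \<in> x}. 1)"
    using assms by (rule prod.If_cases)
  also have "\<dots> = (\<Prod>i\<in>U \<inter> x. -1)" by simp
  finally have "(\<Prod>i\<in>U. (if i \<in> x then -1 else 1::real)) = (\<Prod>i\<in>U \<inter> x. -1)" .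
  then show ?thesis by (simp add: chi_def)
qed

lemma chi_expand:
  assumes "finite U"
  shows "chi U x = (\<Sum>S\<in>Pow U. (-2) ^ card S * (if S \<subseteq> x then 1 else 0))"
proof -
  have "chi U x = (\<Prod>i\<in>U. (if i \<in> x then -2 else 0) + 1)"
    by (simp add: chi_prod assms) (intro prod.cong refl, simp)
  also have "\<dots> = (\<Sum>S\<in>Pow U. (\<Prod>i\<in>S. (if i \<in> x then -2 else 0)) * (\<Prod>i\<in>U - S. 1))"
    by (rule prod_add[OF assms])
  also have "\<dots> = (\<Sum>S\<in>Pow U. (-2) ^ card S * (if S \<subseteq> x then 1 else 0))"
  proof (intro sum.cong refl)
    fix S assume "S \<in> Pow U"
    then have fS: "finite S" using assms by (auto intro: finite_subset)
    have "(\<Prod>i\<in>S. (if i \<in> x then -2 else 0::real)) = (\<Prod>i\<in>S. -2 * (if i \<in> x then 1 else 0))"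
      by (intro prod.cong refl) simp
    also have "\<dots> = (\<Prod>i\<in>S. -2) * (\<Prod>i\<in>S. (if i \<in> x then 1 else 0))"
      by (rule prod.distrib)
    also have "\<dots> = (-2) ^ card S * (if S \<subseteq> x then 1 else 0)"
      by (simp only: prod_ind[OF fS] prod_constant)
    finally show "(\<Prod>i\<in>S. (if i \<in> x then -2 else 0::real)) * (\<Prod>i\<in>U - S. 1) = (-2) ^ card S * (if S \<subseteq> x then 1 else 0)"
      by simp
  qed
  finally show ?thesis .
qed

lemma rep_exists: "\<exists>c. represents n f c"
proof -
  define h where "h x = (of_bool (f x) :: real)" for x
  define a where "a U = hat n h U / 2 ^ n" for U
  define c where "c S = (if S \<in> cube n then (-2) ^ card S * (\<Sum>U\<in>cube n. if S \<subseteq> U then a U else 0) else 0)" for S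
  have "mlpoly_eval n c x = of_bool (f x)" if x: "x \<in> cube n" for x
  proof -
    have "mlpoly_eval n c x = (\<Sum>S\<in>cube n. \<Sum>U\<in>cube n. if S \<subseteq> U then a U * ((-2) ^ card S * (if S \<subseteq> x then 1 else 0)) else 0)"
    proof -
      have "c S * (if S \<subseteq> x then 1 else 0) = (\<Sum>U\<in>cube n. if S \<subseteq> U then a U * ((-2) ^ card S * (if S \<subseteq> x then 1 else 0)) else 0)"
        if "S \<in> cube n" for S
      proof -
        have "c S * (if S \<subseteq> x then 1 else 0) = (\<Sum>U\<in>cube n. (-2) ^ card S * (if S \<subseteq> U then a U else 0) * (if S \<subseteq> x then 1 else 0))"
          using that by (simp add: c_def sum_distrib_left sum_distrib_right)
        also have "\<dots> = (\<Sum>U\<in>cube n. if S \<subseteq> U then a U * ((-2) ^ card S * (if S \<subseteq> x then 1 else 0)) else 0)"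
          by (intro sum.cong refl) simp
        finally show ?thesis .
      qed
      then show ?thesis unfolding mlpoly_eval_alt by (intro sum.cong refl) simp
    qed
    also have "\<dots> = (\<Sum>U\<in>cube n. \<Sum>S\<in>cube n. if S \<subseteq> U then a U * ((-2) ^ card S * (if S \<subseteq> x then 1 else 0)) else 0)"
      by (rule sum.swap)
    also have "\<dots> = (\<Sum>U\<in>cube n. a U * chi U x)"
    proof (intro sum.cong refl)
      fix U assume U: "U \<in> cube n"
      have P: "{S \<in> cube n. S \<subseteq> U} = Pow U" using U by (auto simp: cube_def)
      have "(\<Sum>S\<in>cube n. if S \<subseteq> U then a U * ((-2) ^ card S * (if S \<subseteq> x then 1 else 0)) else 0)
          = (\<Sum>S\<in>{S \<in> cube n. S \<subseteq> U}. a U * ((-2) ^ card S * (if S \<subseteq> x then 1 else 0)))"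
        by (simp add: sum.inter_filter)
      also have "\<dots> = a U * chi U x"
        by (simp add: P chi_expand cube_elem_finite[OF U] sum_distrib_left)
      finally show "(\<Sum>S\<in>cube n. if S \<subseteq> U then a U * ((-2) ^ card S * (if S \<subseteq> x then 1 else 0)) else 0) = a U * chi U x" .
    qed
    also have "\<dots> = (\<Sum>U\<in>cube n. chi U x * hat n h U) / 2 ^ n"
      by (simp add: a_def sum_divide_distrib mult_ac)
    also have "\<dots> = h x" using hat_inv[OF x, of h] by simp
    finally show ?thesis by (simp add: h_def)
  qed
  moreover have "\<forall>S. S \<notin> cube n \<longrightarrow> c S = 0" by (simp add: c_def)
  ultimately show ?thesis unfolding represents_def by blast
qed

lemma ml_rep: "represents n f (ml_coeffs n f)"
  unfolding ml_coeffs_def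
  by (rule theI'[of "represents n f"]) (use rep_exists rep_unique in blast)

lemma deg_bound:
  assumes "S \<in> cube n" "ml_coeffs n f S \<noteq> 0"
  shows "card S \<le> bdeg n f"
  unfolding bdeg_def
proof (rule Max_ge)
  have "{card S |S. S \<in> cube n \<and> ml_coeffs n f S \<noteq> 0} \<subseteq> card ` cube n" by auto
  then show "finite (insert 0 {card S |S. S \<in> cube n \<and> ml_coeffs n f S \<noteq> 0})"
    by (auto intro: finite_subset)
  show "card S \<in> insert 0 {card S |S. S \<in> cube n \<and> ml_coeffs n f S \<noteq> 0}" using assms by auto
qed

lemma ghat_zero:
  assumes U: "U \<in> cube n" and big: "card U > bdeg n f"
  shows "(\<Sum>x\<in>cube n. (1 - 2 * of_bool (f x)) * chi U x) = 0"
proof -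
  define c where "c = ml_coeffs n f"
  have rep: "represents n f c" unfolding c_def by (rule ml_rep)
  have fx: "of_bool (f x) = (\<Sum>S\<in>cube n. c S * (if S \<subseteq> x then 1 else 0))" if "x \<in> cube n" for x
    using rep that by (simp add: represents_def mlpoly_eval_alt)
  have "U \<noteq> {}" using big by auto
  then have U0: "U \<inter> {..<n} \<noteq> {}" using U by (auto simp: cube_def)
  have inner: "(\<Sum>x\<in>cube n. chi U x * (if S \<subseteq> x then 1 else 0)) = 0" if S: "S \<in> cube n" "c S \<noteq> 0" for S
  proof -
    have "card S \<le> bdeg n f" using deg_bound[OF S(1)] S(2) by (simp add: c_def)
    then have "card S < card U" using big by linarith
    then have "\<not> U \<subseteq> S"
    proof (intro notI)
      assume "U \<subseteq> S"
      then have "card U \<le> card S" by (rule card_mono[OF cube_elem_finite[OF S(1)]])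
      then show False using \<open>card S < card U\<close> by simp
    qed
    then obtain i where i: "i \<in> U" "i \<notin> S" by auto
    then have "i < n" using U by (auto simp: cube_def)
    show ?thesis
    proof (rule sum_flip_neg[OF \<open>i < n\<close>])
      fix x assume x: "x \<in> cube n"
      have "S \<subseteq> flip x i \<longleftrightarrow> S \<subseteq> x" using i by (auto simp: flip_def)
      then show "chi U (flip x i) * (if S \<subseteq> flip x i then 1 else 0) = - (chi U x * (if S \<subseteq> x then 1 else 0))"
        using i by (simp add: chi_flip cube_elem_finite[OF x])
    qed
  qed
  have "(\<Sum>x\<in>cube n. (1 - 2 * of_bool (f x)) * chi U x)
      = (\<Sum>x\<in>cube n. chi U x) - 2 * (\<Sum>x\<in>cube n. \<Sum>S\<in>cube n. c S * (chi U x * (if S \<subseteq> x then 1 else 0)))"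
  proof -
    have pt: "(1 - 2 * of_bool (f x)) * chi U x = chi U x - 2 * (\<Sum>S\<in>cube n. c S * (chi U x * (if S \<subseteq> x then 1 else 0)))"
      if x: "x \<in> cube n" for x
    proof -
      have "(1 - 2 * of_bool (f x)) * chi U x = chi U x - 2 * ((\<Sum>S\<in>cube n. c S * (if S \<subseteq> x then 1 else 0)) * chi U x)"
        by (simp only: fx[OF x]) (simp add: algebra_simps)
      also have "(\<Sum>S\<in>cube n. c S * (if S \<subseteq> x then 1 else 0)) * chi U x
          = (\<Sum>S\<in>cube n. c S * (chi U x * (if S \<subseteq> x then 1 else 0)))"
        by (simp only: sum_distrib_right) (intro sum.cong refl, simp)
      finally show ?thesis .
    qed
    show ?thesis by (simp only: sum.cong[OF refl pt] sum_subtractf sum_distrib_left[symmetric])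
  qed
  also have "(\<Sum>x\<in>cube n. \<Sum>S\<in>cube n. c S * (chi U x * (if S \<subseteq> x then 1 else 0)))
      = (\<Sum>S\<in>cube n. c S * (\<Sum>x\<in>cube n. chi U x * (if S \<subseteq> x then 1 else 0)))"
    by (subst sum.swap) (simp add: sum_distrib_left)
  also have "\<dots> = 0"
  proof (intro sum.neutral ballI)
    fix S assume S: "S \<in> cube n"
    show "c S * (\<Sum>x\<in>cube n. chi U x * (if S \<subseteq> x then 1 else 0)) = 0"
      by (cases "c S = 0") (simp_all add: inner[OF S])
  qed
  finally show ?thesis using U0 by (simp add: chi_sum)
qed



lemma nbrs:
  assumes x: "x \<in> cube n"
  shows "{y \<in> cube n. card (x - y) + card (y - x) = 1} = (\<lambda>i. flip x i) ` {..<n}"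
proof (intro equalityI subsetI)
  fix y assume "y \<in> {y \<in> cube n. card (x - y) + card (y - x) = 1}"
  then have y: "y \<in> cube n" "card (x - y) + card (y - x) = 1" by auto
  have fx: "finite x" "finite y" using x y(1) by (auto intro: cube_elem_finite)
  consider "card (x - y) = 1" "card (y - x) = 0" | "card (x - y) = 0" "card (y - x) = 1" using y(2) by linarith
  then show "y \<in> (\<lambda>i. flip x i) ` {..<n}"
  proof cases
    case 1
    then obtain i where i: "x - y = {i}" by (auto simp: card_1_singleton_iff)
    have "y - x = {}" by (metis 1(2) card_0_eq finite_Diff fx(2))
    then have "y = x - {i}" "i \<in> x" using i by auto
    moreover have "i < n" using \<open>i \<in> x\<close> x by (auto simp: cube_def)
    ultimately show ?thesis by (auto simp: flip_def)
  next
    case 2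
    then obtain i where i: "y - x = {i}" by (auto simp: card_1_singleton_iff)
    have "x - y = {}" by (metis 2(1) card_0_eq finite_Diff fx(1))
    then have "y = insert i x" "i \<notin> x" using i by auto
    moreover have "i < n" using i y(1) by (auto simp: cube_def)
    ultimately show ?thesis by (auto simp: flip_def)
  qed
next
  fix y assume "y \<in> (\<lambda>i. flip x i) ` {..<n}"
  then obtain i where i: "i < n" "y = flip x i" by auto
  have "card (x - y) + card (y - x) = 1"
  proof (cases "i \<in> x")
    case True
    then have e: "x - y = {i}" "y - x = {}" using i by (auto simp: flip_def)
    show ?thesis by (simp only: e card.empty card_insert_disjoint finite.emptyI empty_iff) simp
  next
    case False
    then have e: "x - y = {}" "y - x = {i}" using i by (auto simp: flip_def)
    show ?thesis by (simp only: e card.empty card_insert_disjoint finite.emptyI empty_iff) simp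
  qed
  then show "y \<in> {y \<in> cube n. card (x - y) + card (y - x) = 1}" using i x by (simp add: flip_cube)
qed

lemma sens_sum:
  assumes x: "x \<in> cube n"
  shows "(\<Sum>y\<in>cube n. sens_adj n f x y * v y) = (\<Sum>i<n. if f x \<noteq> f (flip x i) then v (flip x i) else 0)"
proof -
  have "(\<Sum>y\<in>cube n. sens_adj n f x y * v y)
      = (\<Sum>y\<in>cube n. if card (x - y) + card (y - x) = 1 then (if f x \<noteq> f y then v y else 0) else 0)"
    by (intro sum.cong refl) (auto simp: sens_adj_def x)
  also have "\<dots> = (\<Sum>y\<in>{y \<in> cube n. card (x - y) + card (y - x) = 1}. if f x \<noteq> f y then v y else 0)"
    by (rule sum.inter_filter[symmetric]) simp
  also have "\<dots> = (\<Sum>y\<in>(\<lambda>i. flip x i) ` {..<n}. if f x \<noteq> f y then v y else 0)"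
    by (subst nbrs[OF x]) (rule refl)
  also have "\<dots> = (\<Sum>i<n. if f x \<noteq> f (flip x i) then v (flip x i) else 0)"
  proof (subst sum.reindex)
    show "inj_on (\<lambda>i. flip x i) {..<n}"
      by (auto simp: inj_on_def flip_def split: if_splits)
  qed simp
  finally show ?thesis .
qed

lemma main_bound:
  fixes n :: nat and f :: "nat set \<Rightarrow> bool" and v :: "nat set \<Rightarrow> real"
  shows "(\<Sum>x\<in>cube n. (\<Sum>y\<in>cube n. sens_adj n f x y * v y)\<^sup>2) \<le> (real (bdeg n f))\<^sup>2 * (\<Sum>x\<in>cube n. (v x)\<^sup>2)"
proof -
  define d where "d = bdeg n f"
  define g where "g x = 1 - 2 * (of_bool (f x) :: real)" for x
  have g2: "(g x)\<^sup>2 = 1" for x by (cases "f x") (auto simp: g_def)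
  have gg: "g x * g x = 1" for x using g2[of x] by (simp add: power2_eq_square)
  define w where "w x = Lop n (\<lambda>y. g y * v y) x - g x * Lop n v x" for x
  have Aw: "(\<Sum>y\<in>cube n. sens_adj n f x y * v y) = g x * w x" if x: "x \<in> cube n" for x
  proof -
    have "g x * w x = g x * Lop n (\<lambda>y. g y * v y) x - Lop n v x"
      by (simp add: w_def right_diff_distrib mult.assoc[symmetric] gg)
    also have "\<dots> = (\<Sum>i<n. (g x * (g x * v x - g (flip x i) * v (flip x i)) - (v x - v (flip x i))) / 2)"
      unfolding Lop_def sum_distrib_left sum_subtractf[symmetric]
      by (intro sum.cong refl) (simp add: field_simps)
    also have "\<dots> = (\<Sum>i<n. if f x \<noteq> f (flip x i) then v (flip x i) else 0)"
      by (intro sum.cong refl) (auto simp: g_def algebra_simps)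
    finally show ?thesis using sens_sum[OF x] by simp
  qed
  have hatw: "hat n w S = (\<Sum>T\<in>cube n. (real (card S) - real (card T)) * Kmat n g S T * hat n v T)"
    if S: "S \<in> cube n" for S
  proof -
    have "hat n w S = hat n (Lop n (\<lambda>y. g y * v y)) S - hat n (\<lambda>x. g x * Lop n v x) S"
      by (simp add: hat_def w_def right_diff_distrib sum_subtractf)
    also have "\<dots> = real (card S) * (\<Sum>T\<in>cube n. Kmat n g S T * hat n v T)
                    - (\<Sum>T\<in>cube n. Kmat n g S T * (real (card T) * hat n v T))"
      by (simp add: hat_Lop S hat_mult[OF S] cong: sum.cong)
    also have "\<dots> = (\<Sum>T\<in>cube n. (real (card S) - real (card T)) * Kmat n g S T * hat n v T)"
      by (simp add: sum_distrib_left sum_subtractf algebra_simps)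
    finally show ?thesis .
  qed
  have Kz: "Kmat n g S T = 0" if "S \<in> cube n" "T \<in> cube n" "card ((S - T) \<union> (T - S)) > d" for S T
  proof -
    have U: "(S - T) \<union> (T - S) \<in> cube n" using that by (auto simp: cube_def)
    have "Kmat n g S T = (\<Sum>x\<in>cube n. (1 - 2 * of_bool (f x)) * chi ((S - T) \<union> (T - S)) x) / 2 ^ n"
      unfolding Kmat_def g_def
      by (intro arg_cong[where f="\<lambda>t. t / 2 ^ n"] sum.cong refl)
         (simp add: chi_mult[symmetric] cube_elem_finite mult_ac)
    also have "\<dots> = 0" using ghat_zero[OF U] that(3) by (simp add: d_def)
    finally show ?thesis .
  qed
  have band: "card S \<le> card T + d \<and> card T \<le> card S + d"
    if "S \<in> cube n" "T \<in> cube n" "Kmat n g S T \<noteq> 0" for S T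
  proof -
    have fin: "finite S" "finite T" using that by (auto intro: cube_elem_finite)
    have sd: "card ((S - T) \<union> (T - S)) \<le> d" using Kz that by force
    have "card S \<le> card (T \<union> (S - T))" using fin by (intro card_mono) auto
    also have "\<dots> \<le> card T + card (S - T)" by (rule card_Un_le)
    also have "card (S - T) \<le> card ((S - T) \<union> (T - S))" using fin by (intro card_mono) auto
    finally have 1: "card S \<le> card T + d" using sd by linarith
    have "card T \<le> card (S \<union> (T - S))" using fin by (intro card_mono) auto
    also have "\<dots> \<le> card S + card (T - S)" by (rule card_Un_le)
    also have "card (T - S) \<le> card ((S - T) \<union> (T - S))" using fin by (intro card_mono) auto
    finally have 2: "card T \<le> card S + d" using sd by linarith
    show ?thesis using 1 2 by simp
  qed
  have "(\<Sum>x\<in>cube n. (\<Sum>y\<in>cube n. sens_adj n f x y * v y)\<^sup>2) = (\<Sum>x\<in>cube n. (w x)\<^sup>2)"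
    by (intro sum.cong refl) (simp add: Aw power_mult_distrib g2)
  also have "\<dots> = (\<Sum>S\<in>cube n. (hat n w S)\<^sup>2) / 2 ^ n"
    by (simp add: parseval)
  also have "(\<Sum>S\<in>cube n. (hat n w S)\<^sup>2) = (\<Sum>S\<in>cube n. (\<Sum>T\<in>cube n. (real (card S) - real (card T)) * Kmat n g S T * hat n v T)\<^sup>2)"
    by (intro sum.cong refl) (simp add: hatw)
  also have "\<dots> \<le> (real d)\<^sup>2 * (\<Sum>T\<in>cube n. (hat n v T)\<^sup>2)"
    by (rule band_bound[OF cube_finite K_iso band]) (simp_all add: g2)
  also have "(\<Sum>T\<in>cube n. (hat n v T)\<^sup>2) = 2 ^ n * (\<Sum>x\<in>cube n. (v x)\<^sup>2)"
    by (rule parseval)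
  finally show ?thesis by (simp add: d_def divide_right_mono)
qed

theorem theorem4p1:
  fixes n :: nat and f :: "nat set \<Rightarrow> bool"
  shows "sens_lambda n f \<le> real (bdeg n f)"
  unfolding sens_lambda_def spec_norm_def
proof (rule cSup_least)
  show "{sqrt (\<Sum>x\<in>cube n. (\<Sum>y\<in>cube n. sens_adj n f x y * v y)\<^sup>2) |v.
          (\<Sum>y\<in>cube n. (v y)\<^sup>2) \<le> 1} \<noteq> {}"
  proof -
    have "\<exists>v. (\<Sum>y\<in>cube n. (v y)\<^sup>2) \<le> (1::real)" by (rule exI[of _ "\<lambda>_. 0"]) simp
    then show ?thesis by blast
  qed
next
  fix t assume "t \<in> {sqrt (\<Sum>x\<in>cube n. (\<Sum>y\<in>cube n. sens_adj n f x y * v y)\<^sup>2) |v.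
          (\<Sum>y\<in>cube n. (v y)\<^sup>2) \<le> 1}"
  then obtain v where t: "t = sqrt (\<Sum>x\<in>cube n. (\<Sum>y\<in>cube n. sens_adj n f x y * v y)\<^sup>2)"
    and v: "(\<Sum>y\<in>cube n. (v y)\<^sup>2) \<le> 1" by auto
  have "t \<le> sqrt ((real (bdeg n f))\<^sup>2 * (\<Sum>x\<in>cube n. (v x)\<^sup>2))"
    unfolding t by (rule real_sqrt_le_mono[OF main_bound])
  also have "\<dots> \<le> sqrt ((real (bdeg n f))\<^sup>2 * 1)"
    by (intro real_sqrt_le_mono mult_left_mono v) simp
  also have "\<dots> = real (bdeg n f)" by simp
  finally show "t \<le> real (bdeg n f)" .
qed

end
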